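(* Let $\Lambda_1,\Lambda_2\subset\mathbb{R}^d$ be almost-orthogonal planes, and let $v$ be a vector whose angle with each of $\Lambda_1$ and $\Lambda_2$ is at most $\alpha$, for some $0<\alpha\le\frac13$. Then the angle between $v$ and $\Lambda_1\cap\Lambda_2$ is at most $10\alpha$.
   Context: Planes are affine subspaces. The angle between a vector $v$ and a plane $\Lambda$ is the infimum of the angles between $v$ and vectors $w\in\Lambda-\Lambda$. Two planes $\Lambda_1,\Lambda_2\subset\mathbb{R}^d$ are almost-orthogonal if there is a basis $\{v_1,\dots,v_d\}$ of $\mathbb{R}^d$ and integers $0\le a\le b\le c\le d$ such that $v_1,\dots,v_b$ form an orthonormal basis of (the direction space of) $\Lambda_1$, $v_{a+1},\dots,v_c$ form an orthonormal basis of (the direction space of) $\Lambda_2$, every vector in the span of $\{v_1,\dots,v_a\}$ makes an angle in $[\pi/2-0.01,\pi/2+0.01]$ with $\Lambda_2$, and every vector in the span of $\{v_{b+1},\dots,v_d\}$ makes an angle in $[\pi/2-0.01,\pi/2+0.01]$ with $\Lambda_1$. *)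

theory Defs
  imports "HOL-Analysis.Analysis" "HOL-Library.Extended_Real"
begin

definition vec_angle :: "'a::euclidean_space \<Rightarrow> 'a \<Rightarrow> real" where
  "vec_angle u w = arccos ((u \<bullet> w) / (norm u * norm w))"

definition is_plane :: "'a::euclidean_space set \<Rightarrow> bool" where
  "is_plane L \<longleftrightarrow> affine L \<and> L \<noteq> {}"

definition dir :: "'a::euclidean_space set \<Rightarrow> 'a set" where
  "dir L = {x - y | x y. x \<in> L \<and> y \<in> L}"

(* angle between a vector and a plane: infimum of angles with nonzero w in L - L
   (extended real; infimum over the empty set is +infinity) *)
definition plane_angle :: "'a::euclidean_space \<Rightarrow> 'a set \<Rightarrow> ereal" where
  "plane_angle v L = Inf ((\<lambda>w. ereal (vec_angle v w)) ` (dir L - {0}))"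

definition orthonormal_basis_of :: "(nat \<Rightarrow> 'a::euclidean_space) \<Rightarrow> nat set \<Rightarrow> 'a set \<Rightarrow> bool" where
  "orthonormal_basis_of vs I S \<longleftrightarrow>
     (\<forall>i\<in>I. norm (vs i) = 1) \<and> (\<forall>i\<in>I. \<forall>j\<in>I. i \<noteq> j \<longrightarrow> vs i \<bullet> vs j = 0) \<and>
     span (vs ` I) = S"

definition near_perp :: "ereal \<Rightarrow> bool" where
  "near_perp t \<longleftrightarrow> ereal (pi/2 - 0.01) \<le> t \<and> t \<le> ereal (pi/2 + 0.01)"

(* Almost-orthogonal planes. The basis v_1..v_d is vs 0 .. vs (d-1) (0-based indices):
   v_1..v_b = vs ` {..<b}, v_{a+1}..v_c = vs ` {a..<c}, v_{b+1}..v_d = vs ` {b..<d}. *)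
definition almost_orthogonal :: "'a::euclidean_space set \<Rightarrow> 'a set \<Rightarrow> bool" where
  "almost_orthogonal L1 L2 \<longleftrightarrow>
     (\<exists>vs :: nat \<Rightarrow> 'a. \<exists>a b c :: nat.
        inj_on vs {..<DIM('a)} \<and> independent (vs ` {..<DIM('a)}) \<and>
        span (vs ` {..<DIM('a)}) = UNIV \<and>
        a \<le> b \<and> b \<le> c \<and> c \<le> DIM('a) \<and>
        orthonormal_basis_of vs {..<b} (dir L1) \<and>
        orthonormal_basis_of vs {a..<c} (dir L2) \<and>
        (\<forall>u\<in>span (vs ` {..<a}). u \<noteq> 0 \<longrightarrow> near_perp (plane_angle u L2)) \<and>
        (\<forall>u\<in>span (vs ` {b..<DIM('a)}). u \<noteq> 0 \<longrightarrow> near_perp (plane_angle u L1)))"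

end

theory Submission
  imports Defs
begin


lemma proj_ex:
  fixes v :: "'a::euclidean_space"
  obtains p where "p \<in> span T" "\<And>w. w \<in> span T \<Longrightarrow> (v - p) \<bullet> w = 0"
proof -
  obtain y z where "y \<in> span T" "\<And>w. w \<in> span T \<Longrightarrow> orthogonal z w" "v = y + z"
    using orthogonal_subspace_decomp_exists by blast
  then show ?thesis using that[of y] by (auto simp: orthogonal_def)
qed

lemma angle_proj:
  fixes v p :: "'a::euclidean_space"
  assumes "v \<noteq> 0" "p \<in> S" "p \<noteq> 0" "\<And>w. w \<in> S \<Longrightarrow> (v - p) \<bullet> w = 0" "w \<in> S" "w \<noteq> 0"
  shows "vec_angle v p \<le> vec_angle v w" "vec_angle v p = arccos (norm p / norm v)"
    "norm p \<le> norm v"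
proof -
  have vp: "v \<bullet> p = p \<bullet> p" using assms(4)[OF assms(2)] by (simp add: inner_diff_left)
  have vw: "v \<bullet> w = p \<bullet> w" using assms(4)[OF assms(5)] by (simp add: inner_diff_left)
  have "norm v ^ 2 = norm p ^ 2 + norm (v - p) ^ 2"
    using vp by (simp add: power2_norm_eq_inner inner_diff_left inner_diff_right inner_commute)
  then have "norm p ^ 2 \<le> norm v ^ 2" by simp
  then show np: "norm p \<le> norm v" using power2_le_imp_le norm_ge_zero by blast
  have nv: "norm v > 0" "norm p > 0" "norm w > 0" using assms by auto
  have e1: "(v \<bullet> p) / (norm v * norm p) = norm p / norm v"
    using vp nv by (simp add: field_simps power2_norm_eq_inner[symmetric] power2_eq_square)
  then show "vec_angle v p = arccos (norm p / norm v)" by (simp add: vec_angle_def)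
  have "\<bar>v \<bullet> w\<bar> \<le> norm v * norm w" by (rule Cauchy_Schwarz_ineq2)
  hence b1: "-1 \<le> (v \<bullet> w) / (norm v * norm w)" using nv by (simp add: field_simps abs_le_iff)
  have "p \<bullet> w \<le> norm p * norm w" by (simp add: norm_cauchy_schwarz)
  hence b2: "(v \<bullet> w) / (norm v * norm w) \<le> norm p / norm v" using nv vw by (simp add: field_simps)
  have b3: "norm p / norm v \<le> 1" using np nv by simp
  show "vec_angle v p \<le> vec_angle v w"
    unfolding vec_angle_def e1 by (rule arccos_le_arccos[OF b1 b2 b3])
qed

lemma angle_small:
  fixes v p :: "'a::euclidean_space"
  assumes "v \<noteq> 0" "p \<in> S" "\<And>w. w \<in> S \<Longrightarrow> (v - p) \<bullet> w = 0"
    and "Inf ((\<lambda>w. ereal (vec_angle v w)) ` (S - {0})) \<le> ereal \<alpha>" "\<alpha> < pi/2"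
  shows "norm (v - p) \<le> sin \<alpha> * norm v"
proof (cases "p = 0")
  case True
  have "ereal (pi/2) \<le> Inf ((\<lambda>w. ereal (vec_angle v w)) ` (S - {0}))"
  proof (rule INF_greatest)
    fix w assume "w \<in> S - {0}"
    then have "v \<bullet> w = 0" using assms(3) True by auto
    then show "ereal (pi/2) \<le> ereal (vec_angle v w)" by (simp add: vec_angle_def)
  qed
  then show ?thesis using assms(4,5) by (meson ereal_less_eq(3) not_le order_trans)
next
  case False
  have "ereal (arccos (norm p / norm v)) \<le> Inf ((\<lambda>w. ereal (vec_angle v w)) ` (S - {0}))"
    using angle_proj[OF assms(1,2) False assms(3)] by (intro INF_greatest) auto
  then have le: "arccos (norm p / norm v) \<le> \<alpha>" using order_trans[OF _ assms(4)] by force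
  have np: "norm p \<le> norm v" using angle_proj[OF assms(1,2) False assms(3) assms(2) False] by simp
  have nv: "norm v > 0" using assms by auto
  have r: "-1 \<le> norm p / norm v" "norm p / norm v \<le> 1" using np nv by (auto intro: order_trans[of _ 0] simp: divide_nonneg_nonneg)
  have "cos \<alpha> \<le> cos (arccos (norm p / norm v))"
    using le arccos_bounded[OF r] assms(5) pi_gt3 by (intro cos_monotone_0_pi_le) auto
  then have c: "cos \<alpha> * norm v \<le> norm p" using cos_arccos[OF r] nv by (simp add: field_simps)
  have a0: "0 \<le> \<alpha>" using le arccos_bounded[OF r] by linarith
  have c0: "0 \<le> cos \<alpha>" using a0 assms(5) by (intro cos_ge_zero) auto
  have s0: "0 \<le> sin \<alpha>" using a0 assms(5) pi_gt3 by (intro sin_ge_zero) auto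
  have vp: "v \<bullet> p = p \<bullet> p" using assms(3)[OF assms(2)] by (simp add: inner_diff_left)
  have pyth: "norm v ^ 2 = norm p ^ 2 + norm (v - p) ^ 2"
    using vp by (simp add: power2_norm_eq_inner inner_diff_left inner_diff_right inner_commute)
  have "(cos \<alpha> * norm v) ^ 2 \<le> norm p ^ 2" using c c0 by (intro power_mono) auto
  have sq: "(sin \<alpha> * norm v)^2 = norm v^2 - (cos \<alpha> * norm v)^2"
    by (simp only: power_mult_distrib sin_squared_eq left_diff_distrib mult_1)
  have "norm (v - p) ^ 2 \<le> (sin \<alpha> * norm v) ^ 2"
    using sq pyth \<open>(cos \<alpha> * norm v) ^ 2 \<le> norm p ^ 2\<close> by linarith
  moreover have "0 \<le> sin \<alpha> * norm v" using s0 by simp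
  ultimately show ?thesis by (rule power2_le_imp_le)
qed

lemma perp_small:
  fixes x q :: "'a::euclidean_space"
  assumes "x \<noteq> 0" "q \<in> S" "\<And>w. w \<in> S \<Longrightarrow> (x - q) \<bullet> w = 0"
    and "ereal (pi/2 - 0.01) \<le> Inf ((\<lambda>w. ereal (vec_angle x w)) ` (S - {0}))"
  shows "norm q \<le> 0.01 * norm x"
proof (cases "q = 0")
  case True then show ?thesis by simp
next
  case False
  have "Inf ((\<lambda>w. ereal (vec_angle x w)) ` (S - {0})) \<le> ereal (vec_angle x q)"
    using assms(2) False by (intro INF_lower) auto
  then have "ereal (pi/2 - 0.01) \<le> ereal (vec_angle x q)" using order_trans[OF assms(4)] by blast
  then have le: "pi/2 - 0.01 \<le> arccos (norm q / norm x)"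
    using angle_proj[OF assms(1,2) False assms(3) assms(2) False] by simp
  have np: "norm q \<le> norm x" using angle_proj[OF assms(1,2) False assms(3) assms(2) False] by simp
  have nv: "norm x > 0" using assms by auto
  have r: "-1 \<le> norm q / norm x" "norm q / norm x \<le> 1" using np nv by (auto intro: order_trans[of _ 0] simp: divide_nonneg_nonneg)
  have "cos (arccos (norm q / norm x)) \<le> cos (pi/2 - 0.01)"
    using le arccos_bounded[OF r] pi_gt3 by (intro cos_monotone_0_pi_le) auto
  also have "\<dots> = sin 0.01" by (simp add: cos_diff)
  also have "\<dots> \<le> 0.01" by (rule sin_x_le_x) simp
  finally show ?thesis using cos_arccos[OF r] nv by (simp add: field_simps)
qed


lemma sin_lb: "\<bar>sin (x::real) - x\<bar> \<le> \<bar>x\<bar>^3/6"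
  using Maclaurin_sin_bound[of x 3] by (simp add: sin_coeff_def numeral_3_eq_3 lessThan_Suc fact_numeral)

lemma final_angle:
  fixes v m :: "'a::euclidean_space"
  assumes "v \<noteq> 0" "m \<noteq> 0" "norm (v - m)^2 \<le> 5.1 * sin \<alpha>^2 * norm v^2" "0 < \<alpha>" "\<alpha> \<le> 1/3"
  shows "vec_angle v m \<le> 10 * \<alpha>"
proof -
  define n where "n = norm v"
  define k where "k = norm m"
  define s where "s = sin \<alpha>"
  define c where "c = (v \<bullet> m) / (n * k)"
  define r where "r = 1 - 5.1 * s^2"
  have n0: "n > 0" "k > 0" using assms by (auto simp: n_def k_def)
  have s0: "0 \<le> s" "s \<le> \<alpha>" unfolding s_def using assms pi_gt3 by (auto intro!: sin_ge_zero sin_x_le_x)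
  have "s^2 \<le> (1/3)^2" using s0 assms by (intro power_mono) auto
  then have r0: "r > 0" unfolding r_def by (simp add: power2_eq_square)
  have D: "norm (v - m)^2 = n^2 + k^2 - 2 * (v \<bullet> m)"
    by (simp add: n_def k_def power2_norm_eq_inner inner_diff_left inner_diff_right inner_commute)
  have u: "2 * (v \<bullet> m) \<ge> n^2 * r + k^2" using D assms(3) unfolding r_def s_def n_def[symmetric]
    by (simp add: algebra_simps)
  have "n^2 * r + k^2 \<ge> 0" using r0 by simp
  then have "(2 * (v \<bullet> m))^2 \<ge> (n^2 * r + k^2)^2" using u by (intro power_mono) auto
  moreover have "(n^2 * r + k^2)^2 \<ge> 4 * n^2 * k^2 * r"
  proof -
    have "(n^2 * r + k^2)^2 - 4 * n^2 * k^2 * r = (n^2 * r - k^2)^2" by (simp add: power2_eq_square algebra_simps)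
    then show ?thesis by (smt (verit) zero_le_power2)
  qed
  ultimately have "(2 * (v \<bullet> m))^2 \<ge> 4 * n^2 * k^2 * r" by linarith
  then have c2: "c^2 \<ge> r" unfolding c_def using n0 by (simp add: power_divide field_simps power_mult_distrib)
  have "v \<bullet> m \<ge> 0" using u \<open>n^2 * r + k^2 \<ge> 0\<close> by linarith
  then have cpos: "c \<ge> 0" unfolding c_def using n0 by simp
  have c1: "c \<le> 1" unfolding c_def n_def k_def using n0 norm_cauchy_schwarz[of v m]
    by (simp add: n_def k_def divide_le_eq_1)
  have ang: "vec_angle v m = arccos c" unfolding vec_angle_def c_def n_def k_def by simp
  define y where "y = 10 * \<alpha>"
  show ?thesis
  proof (cases "y \<ge> pi")
    case True
    then show ?thesis using arccos_bounded[of c] cpos c1 ang y_def by auto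
  next
    case False
    have "cos y \<le> c"
    proof (cases "cos y \<le> 0")
      case True then show ?thesis using cpos by simp
    next
      case cp: False
      have "y < pi/2"
      proof (rule ccontr)
        assume "\<not> y < pi/2"
        then have "cos y \<le> cos (pi/2)" using False by (intro cos_monotone_0_pi_le) auto
        then show False using cp by simp
      qed
      then have y2: "y < 2" "y > 0" using pi_less_4 assms y_def by auto
      have "y^2 \<le> 2^2" using y2 by (intro power_mono) auto
      then have "y^3/6 \<le> 2/3 * y" using y2 by (simp add: power3_eq_cube power2_eq_square)
      then have sy: "sin y \<ge> y/3" proof -
        have "y - sin y \<le> \<bar>y\<bar>^3/6" using sin_lb[of y] by linarith
        then show ?thesis using y2 \<open>y^3/6 \<le> 2/3 * y\<close> by simp
      qed
      have "(y/3)^2 \<le> sin y ^2" using sy y2 by (intro power_mono) auto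
      moreover have "5.1 * s^2 \<le> (y/3)^2"
      proof -
        have "s^2 \<le> \<alpha>^2" using s0 by (intro power_mono) auto
        moreover have "(y/3)^2 = 100/9 * \<alpha>^2" unfolding y_def by (simp add: power2_eq_square)
        moreover have "0 \<le> \<alpha>^2" by simp
        ultimately show ?thesis by linarith
      qed
      ultimately have "cos y ^2 \<le> r" unfolding r_def using sin_squared_eq[of y] by linarith
      then have "cos y ^2 \<le> c^2" using c2 by linarith
      then show ?thesis using cpos power2_le_imp_le by blast
    qed
    then have "arccos c \<le> arccos (cos y)" using cpos c1 by (intro arccos_le_arccos) auto
    also have "\<dots> = y" using False assms y_def by (intro arccos_cos) auto
    finally show ?thesis using ang y_def by simp
  qed
qed


theorem lemma5:
  fixes L1 L2 :: "'a::euclidean_space set" and v :: 'a and \<alpha> :: real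
  assumes "is_plane L1" and "is_plane L2"
    and "almost_orthogonal L1 L2"
    and "L1 \<inter> L2 \<noteq> {}"
    and "v \<noteq> 0"
    and "0 < \<alpha>" and "\<alpha> \<le> 1/3"
    and "plane_angle v L1 \<le> ereal \<alpha>" and "plane_angle v L2 \<le> ereal \<alpha>"
  shows "plane_angle v (L1 \<inter> L2) \<le> ereal (10 * \<alpha>)"
proof -
  from assms(3) obtain vs :: "nat \<Rightarrow> 'a" and a b c where
    ab: "a \<le> b" "b \<le> c" and ob1: "orthonormal_basis_of vs {..<b} (dir L1)"
    and ob2: "orthonormal_basis_of vs {a..<c} (dir L2)"
    and np: "\<forall>u\<in>span (vs ` {..<a}). u \<noteq> 0 \<longrightarrow> near_perp (plane_angle u L2)"
    unfolding almost_orthogonal_def by blast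
  define U where "U = span (vs ` {..<b})"
  define W where "W = span (vs ` {a..<c})"
  have dU: "dir L1 = U" using ob1 unfolding orthonormal_basis_of_def U_def by simp
  have dW: "dir L2 = W" using ob2 unfolding orthonormal_basis_of_def W_def by simp
  have pa1: "Inf ((\<lambda>w. ereal (vec_angle v w)) ` (U - {0})) \<le> ereal \<alpha>"
    using assms(8) dU unfolding plane_angle_def by simp
  have pa2: "Inf ((\<lambda>w. ereal (vec_angle v w)) ` (W - {0})) \<le> ereal \<alpha>"
    using assms(9) dW unfolding plane_angle_def by simp
  have al: "\<alpha> < pi/2" using assms(7) pi_gt3 by simp
  obtain p1 where p1: "p1 \<in> U" "\<And>w. w \<in> U \<Longrightarrow> (v - p1) \<bullet> w = 0"
    using proj_ex[of "vs ` {..<b}" v] unfolding U_def by blast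
  obtain p2 where p2: "p2 \<in> W" "\<And>w. w \<in> W \<Longrightarrow> (v - p2) \<bullet> w = 0"
    using proj_ex[of "vs ` {a..<c}" v] unfolding W_def by blast
  have e1: "norm (v - p1) \<le> sin \<alpha> * norm v" using angle_small[OF assms(5) p1(1) p1(2) pa1 al] .
  have e2: "norm (v - p2) \<le> sin \<alpha> * norm v" using angle_small[OF assms(5) p2(1) p2(2) pa2 al] .
  have "{..<b} = {..<a} \<union> {a..<b}" using ab by auto
  then have "vs ` {..<b} = vs ` {..<a} \<union> vs ` {a..<b}" by (metis image_Un)
  then have "p1 \<in> span (vs ` {..<a} \<union> vs ` {a..<b})" using p1(1) unfolding U_def by simp
  then obtain x m where xm: "x \<in> span (vs ` {..<a})" "m \<in> span (vs ` {a..<b})" "p1 = x + m"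
    unfolding span_Un by blast
  have sub: "{a..<b} \<subseteq> {a..<c}" "{a..<b} \<subseteq> {..<b}" "{..<a} \<subseteq> {..<b}" using ab by auto
  have mW: "m \<in> W" unfolding W_def using xm(2) span_mono[OF image_mono[of "{a..<b}" "{a..<c}" vs]] sub by blast
  have mU: "m \<in> U" unfolding U_def using xm(2) span_mono[OF image_mono[of "{a..<b}" "{..<b}" vs]] sub by blast
  have xU: "x \<in> U" unfolding U_def using xm(1) span_mono[OF image_mono[of "{..<a}" "{..<b}" vs]] sub by blast
  have sa: "0 \<le> sin \<alpha>" "sin \<alpha> \<le> \<alpha>" using assms(6,7) pi_gt3 by (auto intro!: sin_ge_zero sin_x_le_x)
  have xb: "0.99 * norm x \<le> 2 * sin \<alpha> * norm v"
  proof (cases "x = 0")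
    case True then show ?thesis using sa by simp
  next
    case False
    have "near_perp (plane_angle x L2)" using np xm(1) False by blast
    then have npx: "ereal (pi/2 - 0.01) \<le> Inf ((\<lambda>w. ereal (vec_angle x w)) ` (W - {0}))"
      unfolding near_perp_def plane_angle_def dW by simp
    obtain q where q: "q \<in> W" "\<And>w. w \<in> W \<Longrightarrow> (x - q) \<bullet> w = 0"
      using proj_ex[of "vs ` {a..<c}" x] unfolding W_def by blast
    have qs: "norm q \<le> 0.01 * norm x" using perp_small[OF False q(1) q(2) npx] .
    define w where "w = p2 - m"
    have w: "w \<in> W" using p2(1) mW unfolding W_def w_def by (simp add: span_diff)
    have "q - w \<in> W" using q(1) w unfolding W_def by (simp add: span_diff)
    then have orth: "(x - q) \<bullet> (q - w) = 0" using q(2) by blast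
    have "x - w = (x - q) + (q - w)" by simp
    then have "norm (x - w)^2 = norm (x - q)^2 + norm (q - w)^2"
      using norm_add_Pythagorean[of "x - q" "q - w"] orth by (simp add: orthogonal_def)
    then have "norm (x - q)^2 \<le> norm (x - w)^2" by simp
    then have A: "norm (x - q) \<le> norm (x - w)" using power2_le_imp_le norm_ge_zero by blast
    have "x - w = (v - p2) - (v - p1)" using xm(3) unfolding w_def by (simp add: algebra_simps)
    then have "norm (x - w) \<le> norm (v - p2) + norm (v - p1)" by (metis norm_triangle_ineq4)
    moreover have "norm x - norm q \<le> norm (x - q)" by (rule norm_triangle_ineq2)
    ultimately show ?thesis using A e1 e2 qs unfolding power2_eq_square by linarith
  qed
  have vm: "v - m = x + (v - p1)" using xm(3) by simp
  have "x \<bullet> (v - p1) = 0" using p1(2)[OF xU] by (simp add: inner_commute)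
  then have nvm: "norm (v - m)^2 = norm x^2 + norm (v - p1)^2"
    unfolding vm using norm_add_Pythagorean[of x "v - p1"] by (simp add: orthogonal_def)
  have "norm x \<le> (2/0.99) * (sin \<alpha> * norm v)" using xb by simp
  then have "norm x^2 \<le> ((2/0.99) * (sin \<alpha> * norm v))^2" by (intro power_mono) auto
  also have "\<dots> = (2/0.99)^2 * (sin \<alpha> * norm v)^2" by (rule power_mult_distrib)
  finally have nx: "norm x^2 \<le> (2/0.99)^2 * (sin \<alpha> * norm v)^2" .
  have ne: "norm (v - p1)^2 \<le> (sin \<alpha> * norm v)^2" using e1 by (intro power_mono) auto
  have "(2/0.99::real)^2 \<le> 4.1" by (simp add: power2_eq_square)
  then have "(2/0.99)^2 * (sin \<alpha> * norm v)^2 \<le> 4.1 * (sin \<alpha> * norm v)^2"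
    by (intro mult_right_mono) auto
  then have key: "norm (v - m)^2 \<le> 5.1 * sin \<alpha>^2 * norm v^2"
    using nvm nx ne by (simp add: power_mult_distrib)
  have m0: "m \<noteq> 0"
  proof
    assume "m = 0"
    then have "norm v^2 \<le> 5.1 * sin \<alpha>^2 * norm v^2" using key by simp
    moreover have "sin \<alpha>^2 \<le> (1/3)^2" using sa assms(7) by (intro power_mono) auto
    then have "sin \<alpha>^2 \<le> 1/9" by (simp add: power_divide)
    moreover have "norm v^2 > 0" using assms(5) by simp
    ultimately have "5.1 * sin \<alpha>^2 * norm v^2 \<le> (5.1 * (1/9)) * norm v^2"
      by (intro mult_right_mono) auto
    then show False using \<open>norm v^2 \<le> 5.1 * sin \<alpha>^2 * norm v^2\<close> \<open>norm v^2 > 0\<close>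
      by linarith
  qed
  have ang: "vec_angle v m \<le> 10 * \<alpha>" using final_angle[OF assms(5) m0 key assms(6,7)] .
  obtain x0 where x0: "x0 \<in> L1" "x0 \<in> L2" using assms(4) by blast
  have aff: "affine L1" "affine L2" using assms(1,2) unfolding is_plane_def by auto
  have "m \<in> dir L1" using mU dU by simp
  then obtain y1 z1 where yz1: "y1 \<in> L1" "z1 \<in> L1" "m = y1 - z1" unfolding dir_def by blast
  have "m \<in> dir L2" using mW dW by simp
  then obtain y2 z2 where yz2: "y2 \<in> L2" "z2 \<in> L2" "m = y2 - z2" unfolding dir_def by blast
  have "x0 + 1 *\<^sub>R (y1 - z1) \<in> L1" by (rule mem_affine_3_minus[OF aff(1) x0(1) yz1(1,2)])
  moreover have "x0 + 1 *\<^sub>R (y2 - z2) \<in> L2" by (rule mem_affine_3_minus[OF aff(2) x0(2) yz2(1,2)])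
  ultimately have "x0 + m \<in> L1 \<inter> L2" using yz1 yz2 by simp
  then have "m \<in> dir (L1 \<inter> L2)" unfolding dir_def using x0
    by (intro CollectI exI[of _ "x0 + m"] exI[of _ x0]) auto
  then have "plane_angle v (L1 \<inter> L2) \<le> ereal (vec_angle v m)"
    unfolding plane_angle_def using m0 by (intro INF_lower) auto
  also have "\<dots> \<le> ereal (10 * \<alpha>)" using ang by simp
  finally show ?thesis .
qed
end
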